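(* Let $\delta_j,\delta_k$ be coprime integers with $1<\delta_j<\delta_k$, let $r=\delta_k\bmod\delta_j$ and let $f\colon \mathcal B(\delta_j,r)\to\mathcal B(\delta_k,\delta_j)$, $f(x',y')=(y',\,x'-y'\lfloor \delta_k/\delta_j\rfloor)$. Let $(1,y)\in\mathcal B(\delta_k,\delta_j)$. Then $(1,y)\notin f(\mathcal B(\delta_j,r))$ if and only if $-\lfloor\delta_k/\delta_j\rfloor<y\le 0$.
   Context: For coprime positive integers $p,q$ and $i\in\{1,\ldots,\max\{p,q\}\}$, the $\lambda$-B\'ezout couple of $i$ for $(p,q)$ is the unique $(x,y)\in\mathbb Z^2$ with $xp+yq=i$ and $0<y\le p$, and the $\mu$-B\'ezout couple of $i$ for $(p,q)$ is the unique $(x,y)\in\mathbb Z^2$ with $xp+yq=i$ and $0<x\le q$. $\mathcal B(p,q)$ denotes the set of all $\lambda$- and $\mu$-B\'ezout couples for $(p,q)$ (for all such $i$). The map $f$ takes values in $\mathcal B(\delta_k,\delta_j)$. *)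

theory Defs
  imports Main
begin

definition lambda_couples :: "int \<Rightarrow> int \<Rightarrow> (int \<times> int) set" where
  "lambda_couples p q = {(x, y). \<exists>i. 1 \<le> i \<and> i \<le> max p q \<and> x * p + y * q = i \<and> 0 < y \<and> y \<le> p}"

definition mu_couples :: "int \<Rightarrow> int \<Rightarrow> (int \<times> int) set" where
  "mu_couples p q = {(x, y). \<exists>i. 1 \<le> i \<and> i \<le> max p q \<and> x * p + y * q = i \<and> 0 < x \<and> x \<le> q}"

definition bezout_couples :: "int \<Rightarrow> int \<Rightarrow> (int \<times> int) set" where
  "bezout_couples p q = lambda_couples p q \<union> mu_couples p q"

definition fmap :: "int \<Rightarrow> int \<Rightarrow> int \<times> int \<Rightarrow> int \<times> int" where
  "fmap dj dk = (\<lambda>(x', y'). (y', x' - y' * (dk div dj)))"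

end

theory Submission
  imports Defs
begin

lemma key:
  fixes d r t :: int
  assumes "0 < r" "r < d"
  shows "(0 < t * d + r) \<longleftrightarrow> 0 \<le> t"
proof
  assume h: "0 < t * d + r"
  show "0 \<le> t"
  proof (rule ccontr)
    assume "\<not> 0 \<le> t"
    hence "t \<le> -1" by simp
    hence "t * d \<le> -1 * d" using assms by (intro mult_right_mono) auto
    thus False using h assms by simp
  qed
next
  assume "0 \<le> t"
  hence "0 \<le> t * d" using assms by simp
  thus "0 < t * d + r" using assms by simp
qed

theorem proposition3p7:
  fixes dj dk y :: int
  assumes "coprime dj dk" and "1 < dj" and "dj < dk"
    and "(1, y) \<in> bezout_couples dk dj"
  shows "(1, y) \<notin> fmap dj dk ` bezout_couples dj (dk mod dj)
         \<longleftrightarrow> (- (dk div dj) < y \<and> y \<le> 0)"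
proof -
  define q where "q = dk div dj"
  define r where "r = dk mod dj"
  have dk: "dk = q * dj + r" unfolding q_def r_def by simp
  have r0: "0 \<le> r" "r < dj" unfolding r_def using assms(2) by auto
  have r1: "r \<noteq> 0"
  proof
    assume "r = 0"
    hence "dj dvd dk" unfolding r_def by auto
    hence "is_unit dj" using coprime_common_divisor[OF assms(1) dvd_refl] by simp
    thus False using assms(2) by auto
  qed
  obtain i where i: "1 \<le> i" "i \<le> max dk dj" "1 * dk + y * dj = i"
    using assms(4) unfolding bezout_couples_def lambda_couples_def mu_couples_def by blast
  have hyp: "y \<le> 0" "1 \<le> dk + y * dj"
  proof -
    show "1 \<le> dk + y * dj" using i by simp
    have "y * dj \<le> 0" using i assms(3) by (simp add: max_def)
    thus "y \<le> 0" using assms(2) by (simp add: mult_le_0_iff)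
  qed
  have mem: "(1, y) \<in> fmap dj dk ` bezout_couples dj r \<longleftrightarrow> (1 \<le> y*dj + dk \<and> y*dj + dk \<le> dj)"
  proof
    assume "(1, y) \<in> fmap dj dk ` bezout_couples dj r"
    then obtain x' y' where xy: "(x', y') \<in> bezout_couples dj r" "fmap dj dk (x', y') = (1, y)"
      by auto
    hence "y' = 1" "x' = y + q" unfolding fmap_def q_def by auto
    then obtain j where j: "1 \<le> j" "j \<le> max dj r" "(y+q) * dj + 1 * r = j"
      using xy(1) unfolding bezout_couples_def lambda_couples_def mu_couples_def by blast
    have "(y+q) * dj + r = y*dj + dk" using dk by (simp add: algebra_simps)
    thus "1 \<le> y*dj + dk \<and> y*dj + dk \<le> dj" using j r0 by (simp add: max_def)
  next
    assume h: "1 \<le> y*dj + dk \<and> y*dj + dk \<le> dj"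
    have "(y + q, 1) \<in> bezout_couples dj r"
    proof -
      have e: "(y+q) * dj + 1 * r = y*dj + dk" using dk by (simp add: algebra_simps)
      have "max dj r = dj" using r0 by simp
      hence "1 \<le> y*dj+dk \<and> y*dj+dk \<le> max dj r \<and> (y+q) * dj + 1 * r = y*dj+dk \<and> (0::int) < 1 \<and> 1 \<le> dj"
        using h e assms(2) by simp
      thus ?thesis unfolding bezout_couples_def lambda_couples_def by blast
    qed
    moreover have "fmap dj dk (y + q, 1) = (1, y)" unfolding fmap_def q_def by simp
    ultimately show "(1, y) \<in> fmap dj dk ` bezout_couples dj r" by force
  qed
  have "(y*dj + dk \<le> dj) \<longleftrightarrow> \<not> 0 < (y + q - 1) * dj + r"
    using dk by (simp add: algebra_simps not_less)
  also have "\<dots> \<longleftrightarrow> \<not> 0 \<le> y + q - 1" using key[of r dj "y+q-1"] r0 r1 by auto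
  finally have "(y*dj + dk \<le> dj) \<longleftrightarrow> y \<le> - q" by auto
  thus ?thesis using mem hyp unfolding r_def[symmetric] q_def[symmetric] by (auto simp: algebra_simps)
qed

end
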